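(* Let $F$ be WORDER or WMAJORITY with weights $w_1\ge\dots\ge w_n>0$. The Pareto front of MO-$F$ consists of exactly $n+1$ objective vectors, namely $\bigl(\sum_{k=1}^{j}w_k,\;c_j\bigr)$ for $j=0,1,\dots,n$, where $c_0=0$ and $c_j=2j-1$ for $j\ge1$; the empty tree and, for each $1\le i\le n$, any tree whose leaves are exactly $x_1,\dots,x_i$ (each once) are Pareto optimal.
   Context: Fix an integer $n\ge 1$ and real weights $w_1\ge w_2\ge\dots\ge w_n>0$. The terminal set is $T=\{x_1,\bar x_1,\dots,x_n,\bar x_n\}$ ($\bar x_i$ is the complement of $x_i$; $x_i$ is called positive). A syntax tree is either the empty tree or a rooted ordered binary tree whose inner nodes are all labelled by the binary function $J$ (join, exactly two ordered children) and whose leaves are labelled by elements of $T$. The complexity $C(X)$ is the number of nodes of $X$ (0 for the empty tree). The leaf list $l$ of $X$ is the sequence of leaf labels in an inorder traversal. WORDER: build a list $S$ by scanning $l$ from front to rear and appending a literal only if neither it nor its complement is already in $S$; WORDER$(X)=\sum_{i:\,x_i\in S} w_i$. WMAJORITY: WMAJORITY$(X)=\sum w_i$ over all $i$ such that $x_i$ occurs in $l$ at least once and at least as often as $\bar x_i$. MO-$F(X)=(F(X),C(X))$, $F$ maximized and $C$ minimized. $Y$ dominates $X$ iff $F(Y)\ge F(X)$, $C(Y)\le C(X)$ and at least one inequality is strict. A tree is Pareto optimal if no syntax tree dominates it; the Pareto front is the set of objective vectors of Pareto optimal trees. *)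

theory Defs
  imports Complex_Main "HOL-Library.Multiset"
begin

datatype lit = Pos nat | Neg nat

fun var :: "lit \<Rightarrow> nat" where
  "var (Pos i) = i" | "var (Neg i) = i"

fun compl :: "lit \<Rightarrow> lit" where
  "compl (Pos i) = Neg i" | "compl (Neg i) = Pos i"

text \<open>Nonempty syntax trees: leaves labelled by literals, inner nodes by J.
  A syntax tree is either the empty tree (None) or Some t.\<close>
datatype stree = Leaf lit | J stree stree

type_synonym syntax_tree = "stree option"

fun nodes :: "stree \<Rightarrow> nat" where
  "nodes (Leaf _) = 1" | "nodes (J a b) = nodes a + nodes b + 1"

definition C :: "syntax_tree \<Rightarrow> nat" where
  "C X = (case X of None \<Rightarrow> 0 | Some t \<Rightarrow> nodes t)"

fun leaves :: "stree \<Rightarrow> lit list" where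
  "leaves (Leaf l) = [l]" | "leaves (J a b) = leaves a @ leaves b"

definition leaf_list :: "syntax_tree \<Rightarrow> lit list" where
  "leaf_list X = (case X of None \<Rightarrow> [] | Some t \<Rightarrow> leaves t)"

text \<open>Syntax trees over the terminal set {x_1, ~x_1, ..., x_n, ~x_n}.\<close>
definition valid_tree :: "nat \<Rightarrow> syntax_tree \<Rightarrow> bool" where
  "valid_tree n X = (\<forall>l \<in> set (leaf_list X). var l \<in> {1..n})"

definition worder_step :: "lit list \<Rightarrow> lit \<Rightarrow> lit list" where
  "worder_step S l = (if l \<in> set S \<or> compl l \<in> set S then S else S @ [l])"

definition worder_list :: "lit list \<Rightarrow> lit list" where
  "worder_list l = foldl worder_step [] l"

definition worder :: "nat \<Rightarrow> (nat \<Rightarrow> real) \<Rightarrow> syntax_tree \<Rightarrow> real" where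
  "worder n w X = (\<Sum>i \<in> {i \<in> {1..n}. Pos i \<in> set (worder_list (leaf_list X))}. w i)"

definition wmajority :: "nat \<Rightarrow> (nat \<Rightarrow> real) \<Rightarrow> syntax_tree \<Rightarrow> real" where
  "wmajority n w X = (\<Sum>i \<in> {i \<in> {1..n}. count (mset (leaf_list X)) (Pos i) \<ge> 1
        \<and> count (mset (leaf_list X)) (Pos i) \<ge> count (mset (leaf_list X)) (Neg i)}. w i)"

definition dominates :: "(syntax_tree \<Rightarrow> real) \<Rightarrow> syntax_tree \<Rightarrow> syntax_tree \<Rightarrow> bool" where
  "dominates F Y X = (F Y \<ge> F X \<and> C Y \<le> C X \<and> (F Y > F X \<or> C Y < C X))"

definition pareto_optimal :: "nat \<Rightarrow> (syntax_tree \<Rightarrow> real) \<Rightarrow> syntax_tree \<Rightarrow> bool" where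
  "pareto_optimal n F X = (valid_tree n X \<and> \<not> (\<exists>Y. valid_tree n Y \<and> dominates F Y X))"

definition pareto_front :: "nat \<Rightarrow> (syntax_tree \<Rightarrow> real) \<Rightarrow> (real \<times> nat) set" where
  "pareto_front n F = {(F X, C X) | X. pareto_optimal n F X}"

definition cval :: "nat \<Rightarrow> nat" where
  "cval j = (if j = 0 then 0 else 2 * j - 1)"

end

theory Submission
  imports Defs
begin

lemma compl_compl[simp]: "compl (compl x) = x" by (cases x) auto

lemma wl_sub: "set (foldl worder_step S l) \<subseteq> set S \<union> set l"
proof (induction l arbitrary: S)
  case Nil then show ?case by simp
next
  case (Cons a l)
  have "set (worder_step S a) \<subseteq> set S \<union> {a}" by (auto simp: worder_step_def)
  with Cons[of "worder_step S a"] show ?case by auto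
qed

lemma wl_mem: "x \<in> set S \<union> set l \<Longrightarrow> x \<in> set (foldl worder_step S l) \<or> compl x \<in> set (foldl worder_step S l)"
proof (induction l arbitrary: S x)
  case Nil then show ?case by simp
next
  case (Cons a l)
  let ?S = "worder_step S a"
  have "x \<in> set ?S \<or> compl x \<in> set ?S \<or> x \<in> set l"
    using Cons.prems by (auto simp: worder_step_def)
  then show ?case
  proof (elim disjE)
    assume "compl x \<in> set ?S"
    from Cons.IH[of "compl x" ?S] this show ?thesis by auto
  qed (use Cons.IH[of x ?S] in auto)
qed

lemma wl_pos: "Pos k \<in> set l \<Longrightarrow> Neg k \<notin> set l \<Longrightarrow> Pos k \<in> set (worder_list l)"
  using wl_mem[of "Pos k" "[]" l] wl_sub[of "[]" l] unfolding worder_list_def by auto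

fun lin :: "lit \<Rightarrow> lit list \<Rightarrow> stree" where
  "lin a [] = Leaf a" | "lin a (b#bs) = J (Leaf a) (lin b bs)"

definition tree_of :: "lit list \<Rightarrow> syntax_tree" where
  "tree_of l = (case l of [] \<Rightarrow> None | a#bs \<Rightarrow> Some (lin a bs))"

lemma leaves_lin: "leaves (lin a bs) = a # bs"
  by (induction bs arbitrary: a) auto

lemma leaf_list_tree_of: "leaf_list (tree_of l) = l"
  by (cases l) (auto simp: tree_of_def leaf_list_def leaves_lin)

lemma nodes_leaves: "nodes t + 1 = 2 * length (leaves t)"
  by (induction t) auto

lemma leaves_ne: "leaves t \<noteq> []"
  by (induction t) auto

lemma C_cval: "C X = cval (length (leaf_list X))"
proof (cases X)
  case None then show ?thesis by (simp add: C_def cval_def leaf_list_def)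
next
  case (Some t)
  have "length (leaves t) \<noteq> 0" using leaves_ne[of t] by simp
  with nodes_leaves[of t] show ?thesis by (simp add: Some C_def cval_def leaf_list_def)
qed

lemma cval_mono: "cval a \<le> cval b \<longleftrightarrow> a \<le> b"
  by (auto simp: cval_def)

lemma cval_inj: "cval a = cval b \<Longrightarrow> a = b"
  by (auto simp: cval_def split: if_splits)

lemma W_le:
  fixes w :: "nat \<Rightarrow> real" and a b N :: nat
  assumes pos: "\<And>i. 1 \<le> i \<Longrightarrow> i \<le> N \<Longrightarrow> w i > (0::real)"
  shows "a \<le> b \<Longrightarrow> b \<le> N \<Longrightarrow> (\<Sum>k=1..a. w k) \<le> (\<Sum>k=1..b. w k)"
proof (induction b)
  case 0 then show ?case by simp
next
  case (Suc b)
  show ?case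
  proof (cases "a = Suc b")
    case False
    then have "(\<Sum>k=1..a. w k) \<le> (\<Sum>k=1..b. w k)" using Suc by auto
    moreover have "w (Suc b) > 0" using pos Suc.prems by auto
    ultimately show ?thesis by (simp add: sum.cl_ivl_Suc)
  qed simp
qed

lemma W_less:
  fixes w :: "nat \<Rightarrow> real" and a b N :: nat
  assumes pos: "\<And>i. 1 \<le> i \<Longrightarrow> i \<le> N \<Longrightarrow> w i > (0::real)"
  shows "a < b \<Longrightarrow> b \<le> N \<Longrightarrow> (\<Sum>k=1..a. w k) < (\<Sum>k=1..b. w k)"
proof (induction b)
  case 0 then show ?case by simp
next
  case (Suc b)
  have "(\<Sum>k=1..a. w k) \<le> (\<Sum>k=1..b. w k)" using W_le[OF pos] Suc.prems by auto
  moreover have "w (Suc b) > 0" using pos Suc.prems by auto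
  ultimately show ?case by (simp add: sum.cl_ivl_Suc)
qed

lemma sum_le_W:
  fixes w :: "nat \<Rightarrow> real" and m N :: nat
  assumes mono: "\<And>i j. 1 \<le> i \<Longrightarrow> i \<le> j \<Longrightarrow> j \<le> N \<Longrightarrow> w j \<le> (w i::real)"
  shows "m \<le> N \<Longrightarrow> S \<subseteq> {1..m} \<Longrightarrow> sum w S \<le> (\<Sum>k=1..card S. w k)"
proof (induction m arbitrary: S)
  case 0 then show ?case by simp
next
  case (Suc m)
  show ?case
  proof (cases "Suc m \<in> S")
    case False
    then have "S \<subseteq> {1..m}" using Suc.prems by (auto simp: subset_iff le_Suc_eq)
    then show ?thesis using Suc by auto
  next
    case True
    define S' where "S' = S - {Suc m}"
    have S': "S' \<subseteq> {1..m}" using Suc.prems by (auto simp: S'_def)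
    have fin: "finite S'" using finite_subset[OF S'] by simp
    have S: "S = insert (Suc m) S'" "Suc m \<notin> S'" using True by (auto simp: S'_def)
    have cS: "card S = Suc (card S')" using S fin by simp
    have "card S' \<le> m" using card_mono[OF _ S'] by simp
    then have "w (Suc m) \<le> w (Suc (card S'))" using mono Suc.prems by auto
    moreover have "sum w S' \<le> (\<Sum>k=1..card S'. w k)" using Suc S' by auto
    ultimately show ?thesis using S fin cS by (simp add: sum.cl_ivl_Suc)
  qed
qed

lemma F_upper:
  assumes "F = worder n w \<or> F = wmajority n w"
    and pos: "\<And>i. 1 \<le> i \<Longrightarrow> i \<le> n \<Longrightarrow> w i > (0::real)"
  shows "F X \<le> sum w {i\<in>{1..n}. Pos i \<in> set (leaf_list X)}"
  using assms(1)
proof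
  assume F: "F = worder n w"
  have "{i \<in> {1..n}. Pos i \<in> set (worder_list (leaf_list X))} \<subseteq> {i\<in>{1..n}. Pos i \<in> set (leaf_list X)}"
    using wl_sub[of "[]" "leaf_list X"] by (auto simp: worder_list_def)
  moreover have "\<forall>i\<in>{i\<in>{1..n}. Pos i \<in> set (leaf_list X)}. 0 \<le> w i" using pos by (auto intro: less_imp_le)
  ultimately show ?thesis unfolding F worder_def
    by (intro sum_mono2) auto
next
  assume F: "F = wmajority n w"
  have "{i \<in> {1..n}. count (mset (leaf_list X)) (Pos i) \<ge> 1
        \<and> count (mset (leaf_list X)) (Pos i) \<ge> count (mset (leaf_list X)) (Neg i)} \<subseteq> {i\<in>{1..n}. Pos i \<in> set (leaf_list X)}"
    by (auto simp: Suc_le_eq)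
  moreover have "\<forall>i\<in>{i\<in>{1..n}. Pos i \<in> set (leaf_list X)}. 0 \<le> w i" using pos by (auto intro: less_imp_le)
  ultimately show ?thesis unfolding F wmajority_def
    by (intro sum_mono2) auto
qed

lemma F_bound:
  assumes "F = worder n w \<or> F = wmajority n w"
    and pos: "\<And>i. 1 \<le> i \<Longrightarrow> i \<le> n \<Longrightarrow> w i > (0::real)"
    and mono: "\<And>i j. 1 \<le> i \<Longrightarrow> i \<le> j \<Longrightarrow> j \<le> n \<Longrightarrow> w j \<le> w i"
  shows "F X \<le> (\<Sum>k=1..min (length (leaf_list X)) n. w k)"
proof -
  let ?S = "{i\<in>{1..n}. Pos i \<in> set (leaf_list X)}"
  have "card ?S = card (Pos ` ?S)" by (simp add: card_image inj_on_def)
  also have "\<dots> \<le> card (set (leaf_list X))" by (rule card_mono) auto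
  also have "\<dots> \<le> length (leaf_list X)" by (rule card_length)
  finally have c1: "card ?S \<le> length (leaf_list X)" .
  have c2: "card ?S \<le> n" using card_mono[of "{1..n}" ?S] by fastforce
  have "F X \<le> sum w ?S" by (rule F_upper[OF assms(1) pos])
  also have "\<dots> \<le> (\<Sum>k=1..card ?S. w k)" by (rule sum_le_W[OF mono, where m=n]) auto
  also have "\<dots> \<le> (\<Sum>k=1..min (length (leaf_list X)) n. w k)"
    by (rule W_le[OF pos]) (use c1 c2 in auto)
  finally show ?thesis .
qed

lemma F_exact:
  assumes "F = worder n w \<or> F = wmajority n w"
    and i: "i \<le> n" and X: "mset (leaf_list X) = mset (map Pos [1..<i+1])"
  shows "F X = (\<Sum>k=1..i. w k)"
proof -
  have st: "set (leaf_list X) = Pos ` {1..i}"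
    using arg_cong[OF X, of set_mset] by auto
  have d: "distinct (map Pos [1..<i+1])" by (simp add: distinct_map inj_on_def)
  have cnt: "\<And>a. count (mset (leaf_list X)) a = (if a \<in> Pos ` {1..i} then 1 else 0)"
    using d unfolding X distinct_count_atmost_1 by auto
  show ?thesis using assms(1)
  proof
    assume F: "F = worder n w"
    have "{k \<in> {1..n}. Pos k \<in> set (worder_list (leaf_list X))} = {1..i}"
    proof
      show "{k \<in> {1..n}. Pos k \<in> set (worder_list (leaf_list X))} \<subseteq> {1..i}"
        using wl_sub[of "[]" "leaf_list X"] st by (auto simp: worder_list_def)
      show "{1..i} \<subseteq> {k \<in> {1..n}. Pos k \<in> set (worder_list (leaf_list X))}"
        using wl_pos[of _ "leaf_list X"] st i by auto
    qed
    then show ?thesis by (simp add: F worder_def)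
  next
    assume F: "F = wmajority n w"
    have "{k \<in> {1..n}. count (mset (leaf_list X)) (Pos k) \<ge> 1
        \<and> count (mset (leaf_list X)) (Pos k) \<ge> count (mset (leaf_list X)) (Neg k)} = {1..i}"
      unfolding cnt using i by auto
    then show ?thesis by (simp add: F wmajority_def)
  qed
qed

lemma opt_from_vals:
  assumes "F = worder n w \<or> F = wmajority n w"
    and pos: "\<And>i. 1 \<le> i \<Longrightarrow> i \<le> n \<Longrightarrow> w i > (0::real)"
    and mono: "\<And>i j. 1 \<le> i \<Longrightarrow> i \<le> j \<Longrightarrow> j \<le> n \<Longrightarrow> w j \<le> w i"
    and v: "valid_tree n X" and j: "j \<le> n" and FX: "F X = (\<Sum>k=1..j. w k)" and CX: "C X = cval j"
  shows "pareto_optimal n F X"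
  unfolding pareto_optimal_def
proof (intro conjI notI v)
  assume "\<exists>Y. valid_tree n Y \<and> dominates F Y X"
  then obtain Y where dom: "dominates F Y X" by blast
  let ?L = "length (leaf_list Y)"
  have "C Y \<le> C X" using dom by (simp add: dominates_def)
  then have "cval ?L \<le> cval j" using CX by (simp only: C_cval)
  then have L: "?L \<le> j" by (simp only: cval_mono)
  have FY: "F Y \<le> (\<Sum>k=1..?L. w k)" using F_bound[OF assms(1) pos mono, of Y] L j
    by (simp add: min_def split: if_splits)
  show False
  proof (cases "?L < j")
    case True
    have "(\<Sum>k=1..?L. w k) < (\<Sum>k=1..j. w k)" by (rule W_less[OF pos True j])
    then show False using dom FY FX by (simp add: dominates_def)
  next
    case False
    then have "?L = j" using L by simp
    then show False using dom FY FX CX by (auto simp: dominates_def C_cval)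
  qed
qed

lemma opt_vals:
  assumes "F = worder n w \<or> F = wmajority n w"
    and pos: "\<And>i. 1 \<le> i \<Longrightarrow> i \<le> n \<Longrightarrow> w i > (0::real)"
    and mono: "\<And>i j. 1 \<le> i \<Longrightarrow> i \<le> j \<Longrightarrow> j \<le> n \<Longrightarrow> w j \<le> w i"
    and opt: "pareto_optimal n F X"
  shows "\<exists>j\<le>n. F X = (\<Sum>k=1..j. w k) \<and> C X = cval j"
proof -
  let ?L = "length (leaf_list X)"
  define j where "j = min ?L n"
  let ?T = "tree_of (map Pos [1..<j+1])"
  have jn: "j \<le> n" by (simp add: j_def)
  have vT: "valid_tree n ?T" using jn by (auto simp: valid_tree_def leaf_list_tree_of)
  have FT: "F ?T = (\<Sum>k=1..j. w k)" by (rule F_exact[OF assms(1) jn]) (simp add: leaf_list_tree_of)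
  have CT: "C ?T = cval j" unfolding C_cval leaf_list_tree_of length_map length_upt by simp
  have FX: "F X \<le> (\<Sum>k=1..j. w k)" using F_bound[OF assms(1) pos mono, of X] by (simp add: j_def)
  have CX: "cval j \<le> C X" by (simp add: C_cval cval_mono j_def)
  have "\<not> dominates F ?T X" using opt vT by (auto simp: pareto_optimal_def)
  then have "F X = (\<Sum>k=1..j. w k) \<and> C X = cval j" using FT CT FX CX
    by (auto simp: dominates_def)
  then show ?thesis using jn by blast
qed

theorem mainTheorem8:
  fixes n :: nat and w :: "nat \<Rightarrow> real" and F :: "syntax_tree \<Rightarrow> real"
  assumes "n \<ge> 1"
    and "\<And>i j. 1 \<le> i \<Longrightarrow> i \<le> j \<Longrightarrow> j \<le> n \<Longrightarrow> w j \<le> w i"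
    and "\<And>i. 1 \<le> i \<Longrightarrow> i \<le> n \<Longrightarrow> w i > 0"
    and "F = worder n w \<or> F = wmajority n w"
  shows "pareto_front n F = {((\<Sum>k=1..j. w k), cval j) | j. j \<le> n}
    \<and> card (pareto_front n F) = n + 1
    \<and> pareto_optimal n F None
    \<and> (\<forall>i X. 1 \<le> i \<and> i \<le> n \<and> mset (leaf_list X) = mset (map Pos [1..<i+1])
           \<longrightarrow> pareto_optimal n F X)"
proof -
  note FF = assms(4) and pos = assms(3) and mono = assms(2)
  have tree_opt: "pareto_optimal n F X" if i: "i \<le> n" and X: "mset (leaf_list X) = mset (map Pos [1..<i+1])" for i X
  proof -
    have st: "set (leaf_list X) = Pos ` {1..i}"
      using arg_cong[OF X, of set_mset] by auto
    have len: "length (leaf_list X) = i" using arg_cong[OF X, of size] by simp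
    have v: "valid_tree n X" using st i by (auto simp: valid_tree_def)
    have CX: "C X = cval i" unfolding C_cval len ..
    show ?thesis
      by (rule opt_from_vals[OF FF pos mono v i F_exact[OF FF i X] CX])
  qed
  have front: "pareto_front n F = {((\<Sum>k=1..j. w k), cval j) | j. j \<le> n}"
  proof
    show "pareto_front n F \<subseteq> {((\<Sum>k=1..j. w k), cval j) | j. j \<le> n}"
      unfolding pareto_front_def using opt_vals[OF FF pos mono] by fastforce
    show "{((\<Sum>k=1..j. w k), cval j) | j. j \<le> n} \<subseteq> pareto_front n F"
    proof clarify
      fix j assume j: "j \<le> n"
      let ?T = "tree_of (map Pos [1..<j+1])"
      have "pareto_optimal n F ?T" by (rule tree_opt[OF j]) (simp add: leaf_list_tree_of)
      moreover have "F ?T = (\<Sum>k=1..j. w k)" by (rule F_exact[OF FF j]) (simp add: leaf_list_tree_of)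
      moreover have "C ?T = cval j" unfolding C_cval leaf_list_tree_of length_map length_upt by simp
      ultimately show "((\<Sum>k=1..j. w k), cval j) \<in> pareto_front n F"
        unfolding pareto_front_def by (metis (mono_tags, lifting) mem_Collect_eq)
    qed
  qed
  have img: "{((\<Sum>k=1..j. w k), cval j) | j. j \<le> n} = (\<lambda>j. ((\<Sum>k=1..j. w k), cval j)) ` {..n}"
    by auto
  have inj: "inj_on (\<lambda>j. ((\<Sum>k=1..j. w k), cval j)) {..n}"
    by (rule inj_onI) (auto dest: cval_inj)
  have card: "card (pareto_front n F) = n + 1"
    unfolding front img using card_image[OF inj] by simp
  have none: "pareto_optimal n F None"
  proof -
    have "F None = (\<Sum>k=1..0. w k)"
      by (rule F_exact[OF FF, where i=0 and X=None]) (simp_all add: leaf_list_def)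
    then show ?thesis
      by (intro opt_from_vals[OF FF pos mono, where j=0])
         (simp_all add: valid_tree_def leaf_list_def C_def cval_def)
  qed
  show ?thesis using front card none tree_opt by blast
qed

end
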